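(* Suppose observations $(x_i,y_i)$, $i=1,\dots,n$, are generated from $y_i=f(x_i)+\varepsilon_i$ with $\varepsilon_i$ i.i.d. $N(0,\sigma^2)$. Let $\mathbf{B}$ be the $n\times J$ matrix with $\mathbf{B}_{ij}=B_j(x_i)$ (cubic B-spline basis), assumed of full column rank, $\mathbf{f}=(f(x_1),\dots,f(x_n))^T$ and $\mathbf{y}=(y_1,\dots,y_n)^T$. Let $\hat\gamma^{ls}=(\mathbf{B}^T\mathbf{B})^{-1}\mathbf{B}^T\mathbf{y}$ be the unconstrained cubic spline coefficients and $\hat\gamma$ the monotone cubic spline coefficients, i.e. a minimizer of $\|\mathbf{y}-\mathbf{B}\gamma\|_2^2$ subject to $\gamma_1\le\cdots\le\gamma_J$. Let $\mathbf{G}$ be the $g\times J$ ($g<J$) tie matrix of $\hat\gamma$: partition $\{1,\dots,J\}$ into the maximal blocks $I_1,\dots,I_g$ of consecutive indices on which $\hat\gamma$ is constant and set $\mathbf{G}_{rj}=1$ if $j\in I_r$, $0$ otherwise, so that $\mathbf{B}\hat\gamma=\mathbf{H}_g\mathbf{y}$ with $\mathbf{H}_g=\mathbf{B}\mathbf{G}^T(\mathbf{G}\mathbf{B}^T\mathbf{B}\mathbf{G}^T)^{-1}\mathbf{G}\mathbf{B}^T$; treat $\mathbf{G}$ as fixed (non-random). Let $\mathbf{H}=\mathbf{B}(\mathbf{B}^T\mathbf{B})^{-1}\mathbf{B}^T$, $\mathrm{MSE}(\hat{\mathbf{y}})=\mathbb{E}\|\mathbf{H}_g\mathbf{y}-\mathbf{f}\|_2^2$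 and $\mathrm{MSE}(\hat{\mathbf{y}}^{ls})=\mathbb{E}\|\mathbf{B}\hat\gamma^{ls}-\mathbf{f}\|_2^2$. Then $\mathbf{H}-\mathbf{H}_g$ is positive semidefinite, and if $$\sigma^2\ge\frac{\mathbf{f}^T(\mathbf{H}-\mathbf{H}_g)\mathbf{f}}{J-g},$$ then $\mathrm{MSE}(\hat{\mathbf{y}})\le\mathrm{MSE}(\hat{\mathbf{y}}^{ls})$.
   Context: $B_1,\dots,B_J$ are cubic B-spline basis functions on knots $\xi_0<\cdots<\xi_{K+1}$, $J=K+4$ (defined recursively from an augmented knot sequence in the standard Cox–de Boor way). *)

theory Defs imports "HOL-Probability.Probability" begin

text \<open>A matrix is a function nat => nat => real, a vector nat => real; dimensions are
explicit arguments. mmul k A B is the product of an (m x k) and a (k x p) matrix.\<close>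

definition mmul :: "nat \<Rightarrow> (nat \<Rightarrow> nat \<Rightarrow> real) \<Rightarrow> (nat \<Rightarrow> nat \<Rightarrow> real) \<Rightarrow> nat \<Rightarrow> nat \<Rightarrow> real" where
  "mmul k A B = (\<lambda>i j. \<Sum>l<k. A i l * B l j)"

definition mtr :: "(nat \<Rightarrow> nat \<Rightarrow> real) \<Rightarrow> nat \<Rightarrow> nat \<Rightarrow> real" where
  "mtr A = (\<lambda>i j. A j i)"

definition mvec :: "nat \<Rightarrow> (nat \<Rightarrow> nat \<Rightarrow> real) \<Rightarrow> (nat \<Rightarrow> real) \<Rightarrow> nat \<Rightarrow> real" where
  "mvec k A v = (\<lambda>i. \<Sum>j<k. A i j * v j)"

text \<open>Inverse of an m x m matrix (meaningful when it is invertible).\<close>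
definition minv :: "nat \<Rightarrow> (nat \<Rightarrow> nat \<Rightarrow> real) \<Rightarrow> nat \<Rightarrow> nat \<Rightarrow> real" where
  "minv m A = (SOME Ai. (\<forall>i<m. \<forall>j<m. mmul m A Ai i j = (if i = j then 1 else 0)) \<and>
                        (\<forall>i<m. \<forall>j<m. mmul m Ai A i j = (if i = j then 1 else 0)))"

definition full_col_rank :: "nat \<Rightarrow> nat \<Rightarrow> (nat \<Rightarrow> nat \<Rightarrow> real) \<Rightarrow> bool" where
  "full_col_rank n k A \<longleftrightarrow> (\<forall>c. (\<forall>i<n. (\<Sum>j<k. A i j * c j) = 0) \<longrightarrow> (\<forall>j<k. c j = 0))"

definition qform :: "nat \<Rightarrow> (nat \<Rightarrow> nat \<Rightarrow> real) \<Rightarrow> (nat \<Rightarrow> real) \<Rightarrow> real" where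
  "qform m A v = (\<Sum>i<m. \<Sum>j<m. v i * A i j * v j)"

definition psd :: "nat \<Rightarrow> (nat \<Rightarrow> nat \<Rightarrow> real) \<Rightarrow> bool" where
  "psd m A \<longleftrightarrow> (\<forall>v. qform m A v \<ge> 0)"

text \<open>bspl t b j k x = B-spline of order k (degree k-1) on knots t j, ..., t (j+k).
Order 1: indicator of [t j, t (j+1)), where the last nondegenerate interval ending at the
right boundary b is taken closed.  Divisions 0/0 are 0 (Isabelle convention = usual convention).\<close>
fun bspl :: "(nat \<Rightarrow> real) \<Rightarrow> real \<Rightarrow> nat \<Rightarrow> nat \<Rightarrow> real \<Rightarrow> real" where
  "bspl t b j 0 x = 0"
| "bspl t b j (Suc 0) x =
     (if (t j \<le> x \<and> x < t (Suc j)) \<or> (t j < t (Suc j) \<and> t (Suc j) = b \<and> x = b) then 1 else 0)"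
| "bspl t b j (Suc (Suc m)) x =
     (x - t j) / (t (j + m + 1) - t j) * bspl t b j (Suc m) x
   + (t (j + m + 2) - x) / (t (j + m + 2) - t (Suc j)) * bspl t b (Suc j) (Suc m) x"

text \<open>Augmented knot sequence for interior/boundary knots xi 0 < ... < xi (K+1):
xi 0 four times, xi 1 .. xi K, xi (K+1) four times (indices 0 .. K+7).\<close>
definition aug_knots :: "(nat \<Rightarrow> real) \<Rightarrow> nat \<Rightarrow> nat \<Rightarrow> real" where
  "aug_knots xi K i = (if i \<le> 3 then xi 0 else if i \<le> K + 4 then xi (i - 3) else xi (K + 1))"

text \<open>cubic_bspline xi K j, for j < K+4, is the basis function B_(j+1) of the paper.\<close>
definition cubic_bspline :: "(nat \<Rightarrow> real) \<Rightarrow> nat \<Rightarrow> nat \<Rightarrow> real \<Rightarrow> real" where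
  "cubic_bspline xi K j x = bspl (aug_knots xi K) (xi (K + 1)) j 4 x"

text \<open>Indices 0..J-1.  A new block starts at k>0 iff gam (k-1) \<noteq> gam k; blk gam j is the
(0-based) index of the maximal block of consecutive equal values containing j.\<close>
definition blk :: "(nat \<Rightarrow> real) \<Rightarrow> nat \<Rightarrow> nat" where
  "blk gam j = card {k. 0 < k \<and> k \<le> j \<and> gam (k - 1) \<noteq> gam k}"

definition nblocks :: "nat \<Rightarrow> (nat \<Rightarrow> real) \<Rightarrow> nat" where
  "nblocks J gam = Suc (card {k. 0 < k \<and> k < J \<and> gam (k - 1) \<noteq> gam k})"

definition tie_mat :: "(nat \<Rightarrow> real) \<Rightarrow> nat \<Rightarrow> nat \<Rightarrow> real" where
  "tie_mat gam r j = (if r = blk gam j then 1 else 0)"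

end

theory Submission imports Defs "Jordan_Normal_Form.Determinant" begin


lemma mmul_assoc: "mmul k (mmul l A B) C = mmul l A (mmul k B C)"
  unfolding mmul_def
  by (auto intro!: ext simp: sum_distrib_left sum_distrib_right mult_ac intro: sum.swap)

lemma mtr_mmul: "mtr (mmul k A B) = mmul k (mtr B) (mtr A)"
  by (auto intro!: ext simp: mtr_def mmul_def mult_ac)

lemma mtr_mtr[simp]: "mtr (mtr A) = A"
  by (simp add: mtr_def)

lemma mvec_mmul: "mvec k (mmul l A B) v = mvec l A (mvec k B v)"
  unfolding mmul_def mvec_def
  by (auto intro!: ext simp: sum_distrib_left sum_distrib_right mult_ac intro: sum.swap)

lemma mmul_idR:
  assumes "\<forall>l<k. \<forall>j<k. E l j = (if l = j then 1 else 0)" "j < k"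
  shows "mmul k X E i j = X i j"
proof -
  have "mmul k X E i j = (\<Sum>l<k. if l = j then X i l else 0)"
    unfolding mmul_def using assms by (intro sum.cong) auto
  also have "\<dots> = X i j" using assms(2) by (simp add: sum.delta')
  finally show ?thesis .
qed

lemma mmul_idL:
  assumes "\<forall>i<k. \<forall>l<k. E i l = (if i = l then 1 else 0)" "i < k"
  shows "mmul k E X i j = X i j"
proof -
  have "mmul k E X i j = (\<Sum>l<k. if i = l then X l j else 0)"
    unfolding mmul_def using assms by (intro sum.cong) auto
  also have "\<dots> = X i j" using assms(2) by (simp add: sum.delta)
  finally show ?thesis .
qed

lemma mmul_cong:
  assumes "\<forall>l<k. X i l = X' i l" "\<forall>l<k. Y l j = Y' l j"
  shows "mmul k X Y i j = mmul k X' Y' i j"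
  unfolding mmul_def using assms by (intro sum.cong) auto


lemma inv_exists:
  fixes S :: "nat \<Rightarrow> nat \<Rightarrow> real"
  assumes inj: "\<forall>c. (\<forall>i<k. (\<Sum>j<k. S i j * c j) = 0) \<longrightarrow> (\<forall>j<k. c j = 0)"
  shows "\<exists>Mi. (\<forall>i<k. \<forall>j<k. mmul k S Mi i j = (if i = j then 1 else 0)) \<and>
              (\<forall>i<k. \<forall>j<k. mmul k Mi S i j = (if i = j then 1 else 0))"
proof -
  define A where "A = mat k k (\<lambda>(i,j). S i j)"
  have A: "A \<in> carrier_mat k k" by (simp add: A_def)
  have "det A \<noteq> 0"
  proof
    assume "det A = 0"
    then obtain v where v: "v \<in> carrier_vec k" "v \<noteq> 0\<^sub>v k" "A *\<^sub>v v = 0\<^sub>v k"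
      using det_0_iff_vec_prod_zero_field[OF A] by auto
    define c where "c = (\<lambda>j. if j < k then v $ j else 0)"
    have "\<forall>i<k. (\<Sum>j<k. S i j * c j) = 0"
    proof (intro allI impI)
      fix i assume i: "i < k"
      have "(A *\<^sub>v v) $ i = 0" using v i by simp
      then show "(\<Sum>j<k. S i j * c j) = 0"
        using i v(1) by (simp add: A_def scalar_prod_def c_def lessThan_atLeast0 row_def)
    qed
    with inj have "\<forall>j<k. c j = 0" by blast
    then have "v = 0\<^sub>v k" using v(1) by (intro eq_vecI) (auto simp: c_def)
    with v show False by simp
  qed
  then have "A \<in> Units (ring_mat TYPE(real) k ())" by (rule det_non_zero_imp_unit[OF A])
  then obtain B where B: "B \<in> carrier_mat k k" "A * B = 1\<^sub>m k" "B * A = 1\<^sub>m k"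
    by (auto simp: Units_def ring_mat_def)
  show ?thesis
  proof (intro exI[of _ "\<lambda>i j. B $$ (i,j)"] conjI allI impI)
    fix i j assume ij: "i < k" "j < k"
    have "(A * B) $$ (i,j) = (if i = j then 1 else 0)" using B ij by simp
    then show "mmul k S (\<lambda>i j. B $$ (i, j)) i j = (if i = j then 1 else 0)"
      using B ij by (simp add: A_def mmul_def scalar_prod_def lessThan_atLeast0 row_def col_def)
    have "(B * A) $$ (i,j) = (if i = j then 1 else 0)" using B ij by simp
    then show "mmul k (\<lambda>i j. B $$ (i, j)) S i j = (if i = j then 1 else 0)"
      using B ij by (simp add: A_def mmul_def scalar_prod_def lessThan_atLeast0 row_def col_def)
  qed
qed

lemma proj:
  fixes A :: "nat \<Rightarrow> nat \<Rightarrow> real"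
  assumes fcr: "full_col_rank n k A"
  defines "S \<equiv> mmul n (mtr A) A"
  defines "Mi \<equiv> minv k S"
  defines "R \<equiv> mmul k (mmul k A Mi) (mtr A)"
  shows "\<And>i j. R i j = R j i" and "mmul n R R = R" and "\<And>i j. j < k \<Longrightarrow> mmul n R A i j = A i j"
    and "(\<Sum>i<n. R i i) = real k"
proof -
  have injS: "\<forall>c. (\<forall>i<k. (\<Sum>j<k. S i j * c j) = 0) \<longrightarrow> (\<forall>j<k. c j = 0)"
  proof (rule allI, rule impI)
    fix c assume h: "\<forall>i<k. (\<Sum>j<k. S i j * c j) = 0"
    have "(\<Sum>i<n. (\<Sum>j<k. A i j * c j)\<^sup>2) = (\<Sum>i<n. \<Sum>j<k. \<Sum>l<k. c j * (A i j * A i l) * c l)"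
      by (simp add: power2_eq_square sum_product mult_ac)
    also have "\<dots> = (\<Sum>j<k. \<Sum>i<n. \<Sum>l<k. c j * (A i j * A i l) * c l)"
      by (rule sum.swap)
    also have "\<dots> = (\<Sum>j<k. \<Sum>l<k. \<Sum>i<n. c j * (A i j * A i l) * c l)"
      by (intro sum.cong refl sum.swap)
    also have "\<dots> = (\<Sum>j<k. c j * (\<Sum>l<k. S j l * c l))"
      by (simp add: S_def mmul_def mtr_def sum_distrib_left sum_distrib_right mult_ac)
    also have "\<dots> = 0" using h by simp
    finally have z: "(\<Sum>i<n. (\<Sum>j<k. A i j * c j)\<^sup>2) = 0" .
    have "\<forall>i<n. (\<Sum>j<k. A i j * c j) = 0"
      using z by (subst (asm) sum_nonneg_eq_0_iff) auto
    then show "\<forall>j<k. c j = 0" using fcr unfolding full_col_rank_def by blast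
  qed
  from someI_ex[OF inv_exists[OF injS]]
  have SM: "\<forall>i<k. \<forall>j<k. mmul k S Mi i j = (if i = j then 1 else 0)"
   and MS: "\<forall>i<k. \<forall>j<k. mmul k Mi S i j = (if i = j then 1 else 0)"
    unfolding Mi_def minv_def by blast+
  have Ssym: "mtr S = S" unfolding S_def by (simp add: mtr_mmul)
  have Msym: "mtr Mi i j = Mi i j" if "i < k" "j < k" for i j
  proof -
    have "mtr Mi i j = mmul k (mtr Mi) (mmul k S Mi) i j"
      using mmul_idR[OF SM that(2)] by simp
    also have "\<dots> = mmul k (mtr (mmul k S Mi)) Mi i j"
      by (simp add: mmul_assoc[symmetric] mtr_mmul Ssym)
    also have "\<dots> = Mi i j"
      by (rule mmul_idL) (use SM that in \<open>auto simp: mtr_def\<close>)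
    finally show ?thesis .
  qed
  define T where "T = mmul k Mi (mtr A)"
  have RT: "R = mmul k A T" unfolding R_def T_def by (simp add: mmul_assoc)
  have TA: "mmul n T A = mmul k Mi S" unfolding T_def S_def by (simp add: mmul_assoc)
  have TAid: "\<forall>i<k. \<forall>j<k. mmul n T A i j = (if i = j then 1 else 0)" using MS TA by simp
  show "R i j = R j i" for i j
  proof -
    have "mtr R = mmul k A (mmul k (mtr Mi) (mtr A))" unfolding R_def by (simp add: mtr_mmul)
    also have "\<dots> = mmul k (mmul k A (mtr Mi)) (mtr A)" by (simp add: mmul_assoc)
    finally have "mtr R j i = mmul k (mmul k A (mtr Mi)) (mtr A) j i" by simp
    also have "\<dots> = R j i" unfolding R_def
      by (rule mmul_cong) (auto simp: mmul_def Msym intro!: sum.cong)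
    finally show ?thesis by (simp add: mtr_def)
  qed
  show "mmul n R R = R"
  proof (intro ext)
    fix i j
    have "mmul n R R = mmul k A (mmul k (mmul n T A) T)" unfolding RT by (simp add: mmul_assoc)
    then have "mmul n R R i j = mmul k A (mmul k (mmul n T A) T) i j" by simp
    also have "\<dots> = mmul k A T i j"
      by (rule mmul_cong) (auto intro: mmul_idL[OF TAid])
    finally show "mmul n R R i j = R i j" using RT by simp
  qed
  show "mmul n R A i j = A i j" if "j < k" for i j
  proof -
    have "mmul n R A = mmul k A (mmul n T A)" unfolding RT by (simp add: mmul_assoc)
    then show ?thesis using mmul_idR[OF TAid that] by simp
  qed
  show "(\<Sum>i<n. R i i) = real k"
  proof -
    have "(\<Sum>i<n. R i i) = (\<Sum>i<n. \<Sum>l<k. A i l * T l i)" unfolding RT mmul_def by simp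
    also have "\<dots> = (\<Sum>l<k. \<Sum>i<n. T l i * A i l)" by (subst sum.swap) (simp add: mult_ac)
    also have "\<dots> = (\<Sum>l<k. mmul n T A l l)" by (simp add: mmul_def)
    also have "\<dots> = (\<Sum>l<k. 1)" using TAid by simp
    finally show ?thesis by simp
  qed
qed


lemma sq_mvec:
  assumes sym: "\<And>i j. R i j = R j i" and idem: "mmul n R R = R"
  shows "(\<Sum>i<n. (mvec n R v i)\<^sup>2) = qform n R v"
proof -
  have "(\<Sum>i<n. (mvec n R v i)\<^sup>2) = (\<Sum>i<n. \<Sum>k<n. \<Sum>l<n. v k * (R k i * R i l) * v l)"
    by (simp add: mvec_def power2_eq_square sum_product mult_ac sym[of k i for k i])
  also have "\<dots> = (\<Sum>k<n. \<Sum>i<n. \<Sum>l<n. v k * (R k i * R i l) * v l)" by (rule sum.swap)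
  also have "\<dots> = (\<Sum>k<n. \<Sum>l<n. \<Sum>i<n. v k * (R k i * R i l) * v l)"
    by (intro sum.cong refl sum.swap)
  also have "\<dots> = (\<Sum>k<n. \<Sum>l<n. v k * mmul n R R k l * v l)"
    by (simp add: mmul_def sum_distrib_left sum_distrib_right)
  also have "\<dots> = qform n R v" by (simp add: idem qform_def)
  finally show ?thesis .
qed

lemma resid:
  assumes sym: "\<And>i j. R i j = R j i" and idem: "mmul n R R = R"
  shows "(\<Sum>i<n. (mvec n R v i - v i)\<^sup>2) = (\<Sum>i<n. (v i)\<^sup>2) - qform n R v"
proof -
  have c: "(\<Sum>i<n. mvec n R v i * v i) = qform n R v"
    by (simp add: mvec_def qform_def sum_distrib_left sum_distrib_right mult_ac)
  have "(\<Sum>i<n. (mvec n R v i - v i)\<^sup>2) = (\<Sum>i<n. (mvec n R v i)\<^sup>2) - 2 * (\<Sum>i<n. mvec n R v i * v i) + (\<Sum>i<n. (v i)\<^sup>2)"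
    by (simp add: power2_diff sum.distrib sum_subtractf sum_distrib_left mult_ac)
  then show ?thesis using c sq_mvec[OF sym idem] by simp
qed

lemma frob:
  assumes sym: "\<And>i j. R i j = R j i" and idem: "mmul n R R = R"
  shows "(\<Sum>i<n. \<Sum>k<n. (R i k)\<^sup>2) = (\<Sum>i<n. R i i)"
proof -
  have "(\<Sum>i<n. \<Sum>k<n. (R i k)\<^sup>2) = (\<Sum>i<n. mmul n R R i i)"
    by (simp add: mmul_def power2_eq_square sym[of _ i for i])
  then show ?thesis by (simp add: idem)
qed

lemma blk_lt:
  assumes "j < J"
  shows "blk gam j < nblocks J gam"
proof -
  have "{k. 0 < k \<and> k \<le> j \<and> gam (k - 1) \<noteq> gam k} \<subseteq> {k. 0 < k \<and> k < J \<and> gam (k - 1) \<noteq> gam k}"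
    using assms by auto
  moreover have "finite {k. 0 < k \<and> k < J \<and> gam (k - 1) \<noteq> gam k}" by simp
  ultimately show ?thesis unfolding blk_def nblocks_def
    by (simp add: card_mono less_Suc_eq_le)
qed

lemma blk_0: "blk gam 0 = 0"
proof -
  have "{k. 0 < k \<and> k \<le> (0::nat) \<and> gam (k - 1) \<noteq> gam k} = {}" by auto
  then show ?thesis unfolding blk_def by simp
qed

lemma blk_Suc: "blk gam (Suc j) \<le> Suc (blk gam j)"
proof -
  have "{k. 0 < k \<and> k \<le> Suc j \<and> gam (k - 1) \<noteq> gam k} \<subseteq> insert (Suc j) {k. 0 < k \<and> k \<le> j \<and> gam (k - 1) \<noteq> gam k}"
    by auto
  then have "blk gam (Suc j) \<le> card (insert (Suc j) {k. 0 < k \<and> k \<le> j \<and> gam (k - 1) \<noteq> gam k})"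
    unfolding blk_def by (intro card_mono) auto
  also have "\<dots> \<le> Suc (blk gam j)" unfolding blk_def by (simp add: card_insert_if)
  finally show ?thesis .
qed

lemma blk_surj_aux: "r \<le> blk gam j \<Longrightarrow> \<exists>j'\<le>j. blk gam j' = r"
proof (induction j arbitrary: r)
  case 0 then show ?case by (simp add: blk_0)
next
  case (Suc j)
  show ?case
  proof (cases "r \<le> blk gam j")
    case True then show ?thesis using Suc.IH le_SucI by blast
  next
    case False
    then have "r = blk gam (Suc j)" using Suc.prems blk_Suc[of gam j] by simp
    then show ?thesis by blast
  qed
qed

lemma blk_last: "0 < J \<Longrightarrow> blk gam (J - 1) = nblocks J gam - 1"
proof -
  assume J: "0 < J"
  have "{k. 0 < k \<and> k \<le> J - 1 \<and> gam (k - 1) \<noteq> gam k} = {k. 0 < k \<and> k < J \<and> gam (k - 1) \<noteq> gam k}"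
    using J by auto
  then show ?thesis unfolding blk_def nblocks_def by simp
qed

lemma blk_surj:
  assumes "r < nblocks J gam" "0 < J"
  shows "\<exists>j<J. blk gam j = r"
proof -
  have "r \<le> blk gam (J - 1)" using assms blk_last[OF assms(2), of gam] by simp
  then obtain j where "j \<le> J - 1" "blk gam j = r" using blk_surj_aux by blast
  then show ?thesis using assms(2) by (intro exI[of _ j]) auto
qed

lemma fcr_tie:
  assumes fcr: "full_col_rank n J B" and J: "0 < J"
  shows "full_col_rank n (nblocks J gam) (mmul J B (mtr (tie_mat gam)))"
  unfolding full_col_rank_def
proof (rule allI, rule impI)
  fix c
  let ?g = "nblocks J gam"
  assume h: "\<forall>i<n. (\<Sum>r<?g. mmul J B (mtr (tie_mat gam)) i r * c r) = 0"
  define d where "d j = (\<Sum>r<?g. tie_mat gam r j * c r)" for j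
  have "\<forall>i<n. (\<Sum>j<J. B i j * d j) = 0"
  proof (intro allI impI)
    fix i assume i: "i < n"
    have "(\<Sum>j<J. B i j * d j) = (\<Sum>r<?g. mmul J B (mtr (tie_mat gam)) i r * c r)"
      unfolding d_def mmul_def mtr_def
      by (simp add: sum_distrib_left sum_distrib_right mult_ac) (rule sum.swap)
    then show "(\<Sum>j<J. B i j * d j) = 0" using h i by simp
  qed
  then have d0: "\<forall>j<J. d j = 0" using fcr unfolding full_col_rank_def by blast
  have dj: "d j = c (blk gam j)" if "j < J" for j
  proof -
    have "d j = (\<Sum>r<?g. if r = blk gam j then c r else 0)"
      unfolding d_def tie_mat_def by (intro sum.cong) auto
    then show ?thesis using blk_lt[OF that, of gam] by (simp add: sum.delta')
  qed
  show "\<forall>r<?g. c r = 0"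
  proof (intro allI impI)
    fix r assume "r < ?g"
    then obtain j where "j < J" "blk gam j = r" using blk_surj J by blast
    then show "c r = 0" using d0 dj by force
  qed
qed



context
  fixes \<sigma> :: real
  assumes sp: "0 < \<sigma>"
begin

abbreviation "NN \<equiv> density lborel (normal_density 0 \<sigma>)"

lemma NN_prob: "prob_space NN"
  by (rule prob_space_normal_density[OF sp])

lemma NN_int: "integrable NN (\<lambda>x. x ^ m)"
  using integrable_normal_moment[OF sp, of 0 m]
  by (subst integrable_density) auto

lemma NN_int_pow: "integral\<^sup>L NN (\<lambda>x. x ^ m) = integral\<^sup>L lborel (\<lambda>x. normal_density 0 \<sigma> x * x ^ m)"
  by (subst integral_density) auto

lemma NN_m0: "integral\<^sup>L NN (\<lambda>x. x ^ 0) = 1"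
  using NN_int_pow[of 0] integral_normal_density[OF sp, of 0] by simp

lemma NN_m1: "integral\<^sup>L NN (\<lambda>x. x ^ 1) = 0"
  using NN_int_pow[of 1] integral_normal_moment_nz_1[OF sp, of 0] by simp

lemma NN_m2: "integral\<^sup>L NN (\<lambda>x. x ^ 2) = \<sigma>\<^sup>2"
  using NN_int_pow[of 2] integral_normal_moment_even[OF sp, of 0 1] by simp

abbreviation MM :: "nat \<Rightarrow> (nat \<Rightarrow> real) measure" where "MM n \<equiv> PiM {..<n} (\<lambda>_. NN)"

lemma gen_moment:
  "integrable (MM n) (\<lambda>x. \<Prod>i\<in>{..<n}. x i ^ e i) \<and>
   (\<integral>x. (\<Prod>i\<in>{..<n}. x i ^ e i) \<partial>MM n) = (\<Prod>i\<in>{..<n}. integral\<^sup>L NN (\<lambda>t. t ^ e i))"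
proof -
  interpret PP: product_prob_space "\<lambda>_. NN" "{..<n}"
    unfolding product_prob_space_def product_prob_space_axioms_def product_sigma_finite_def
    using NN_prob prob_space_imp_sigma_finite by blast
  show ?thesis
  proof
    show "integrable (MM n) (\<lambda>x. \<Prod>i\<in>{..<n}. x i ^ e i)"
      by (rule PP.product_integrable_prod) (auto simp: NN_int)
    show "(\<integral>x. (\<Prod>i\<in>{..<n}. x i ^ e i) \<partial>MM n) = (\<Prod>i\<in>{..<n}. integral\<^sup>L NN (\<lambda>t. t ^ e i))"
      by (rule PP.product_integral_prod) (auto simp: NN_int)
  qed
qed


lemma MM_prob: "prob_space (MM n)"
proof -
  interpret PP: product_prob_space "\<lambda>_. NN" "{..<n}"
    unfolding product_prob_space_def product_prob_space_axioms_def product_sigma_finite_def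
    using NN_prob prob_space_imp_sigma_finite by blast
  show ?thesis by (rule PP.P.prob_space_axioms)
qed

lemma mom2:
  assumes "a < n" "b < n"
  shows "integrable (MM n) (\<lambda>x. x a * x b) \<and>
         (\<integral>x. x a * x b \<partial>MM n) = (if a = b then \<sigma>\<^sup>2 else 0)"
proof (cases "a = b")
  case True
  define e where "e = (\<lambda>i. if i = a then 2 else (0::nat))"
  have eq: "(\<Prod>i\<in>{..<n}. x i ^ e i) = x a * x b" for x :: "nat \<Rightarrow> real"
  proof -
    have "(\<Prod>i\<in>{..<n}. x i ^ e i) = (\<Prod>i\<in>{..<n}. if i = a then x a ^ 2 else 1)"
      by (rule prod.cong) (auto simp: e_def)
    also have "\<dots> = x a ^ 2" using assms by (subst prod.delta) auto
    finally show ?thesis using True by (simp add: power2_eq_square)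
  qed
  have eq2: "(\<Prod>i\<in>{..<n}. integral\<^sup>L NN (\<lambda>t. t ^ e i)) = \<sigma>\<^sup>2"
  proof -
    have "(\<Prod>i\<in>{..<n}. integral\<^sup>L NN (\<lambda>t. t ^ e i)) = (\<Prod>i\<in>{..<n}. if i = a then \<sigma>\<^sup>2 else 1)"
      by (rule prod.cong) (auto simp: e_def NN_m2 NN_m0[simplified])
    also have "\<dots> = \<sigma>\<^sup>2" using assms by (subst prod.delta) auto
    finally show ?thesis .
  qed
  show ?thesis using gen_moment[of n e] True unfolding eq eq2 by simp
next
  case False
  define e where "e = (\<lambda>i. if i = a \<or> i = b then 1 else (0::nat))"
  have eq: "(\<Prod>i\<in>{..<n}. x i ^ e i) = x a * x b" for x :: "nat \<Rightarrow> real"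
  proof -
    have "(\<Prod>i\<in>{..<n}. x i ^ e i) = (\<Prod>i\<in>{..<n}. (if i = a then x a else 1) * (if i = b then x b else 1))"
      by (rule prod.cong) (use False in \<open>auto simp: e_def\<close>)
    also have "\<dots> = x a * x b" using assms by (simp add: prod.distrib prod.delta)
    finally show ?thesis .
  qed
  have eq2: "(\<Prod>i\<in>{..<n}. integral\<^sup>L NN (\<lambda>t. t ^ e i)) = 0"
    using assms by (intro prod_zero) (auto simp: e_def NN_m1[simplified] intro!: bexI[of _ a])
  show ?thesis using gen_moment[of n e] False unfolding eq eq2 by simp
qed

lemma mom1:
  assumes "a < n"
  shows "integrable (MM n) (\<lambda>x. x a) \<and> (\<integral>x. x a \<partial>MM n) = 0"
proof -
  define e where "e = (\<lambda>i. if i = a then 1 else (0::nat))"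
  have eq: "(\<Prod>i\<in>{..<n}. x i ^ e i) = x a" for x :: "nat \<Rightarrow> real"
  proof -
    have "(\<Prod>i\<in>{..<n}. x i ^ e i) = (\<Prod>i\<in>{..<n}. if i = a then x a else 1)"
      by (rule prod.cong) (auto simp: e_def)
    also have "\<dots> = x a" using assms by (subst prod.delta) auto
    finally show ?thesis .
  qed
  have eq2: "(\<Prod>i\<in>{..<n}. integral\<^sup>L NN (\<lambda>t. t ^ e i)) = 0"
    using assms by (intro prod_zero) (auto simp: e_def NN_m1[simplified] intro!: bexI[of _ a])
  show ?thesis using gen_moment[of n e] unfolding eq eq2 by simp
qed

lemma mse:
  fixes R :: "nat \<Rightarrow> nat \<Rightarrow> real" and c :: "nat \<Rightarrow> real"
  shows "(\<integral>x. (\<Sum>i<n. ((\<Sum>k<n. R i k * x k) + c i)\<^sup>2) \<partial>MM n)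
         = (\<Sum>i<n. (c i)\<^sup>2) + \<sigma>\<^sup>2 * (\<Sum>i<n. \<Sum>k<n. (R i k)\<^sup>2)"
proof -
  interpret P: prob_space "MM n" by (rule MM_prob)
  have pw: "((\<Sum>k<n. R i k * x k) + c i)\<^sup>2 =
      (\<Sum>k<n. \<Sum>l<n. (R i k * R i l) * (x k * x l)) + (\<Sum>k<n. (2 * c i * R i k) * x k) + (c i)\<^sup>2"
    for i and x :: "nat \<Rightarrow> real"
  proof -
    have "(\<Sum>k<n. R i k * x k)\<^sup>2 = (\<Sum>k<n. \<Sum>l<n. (R i k * R i l) * (x k * x l))"
      by (simp add: power2_eq_square sum_product mult_ac)
    moreover have "2 * (\<Sum>k<n. R i k * x k) * c i = (\<Sum>k<n. (2 * c i * R i k) * x k)"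
      by (simp add: sum_distrib_left sum_distrib_right mult_ac)
    ultimately show ?thesis by (simp add: power2_sum)
  qed
  have i2: "integrable (MM n) (\<lambda>x. x k * x l)" if "k < n" "l < n" for k l
    using mom2[OF that] by blast
  have i1: "integrable (MM n) (\<lambda>x. x k)" if "k < n" for k
    using mom1[OF that] by blast
  have intF: "integrable (MM n) (\<lambda>x. (\<Sum>k<n. \<Sum>l<n. (R i k * R i l) * (x k * x l)) + (\<Sum>k<n. (2 * c i * R i k) * x k) + (c i)\<^sup>2)" for i
    by (intro Bochner_Integration.integrable_add Bochner_Integration.integrable_sum integrable_mult_right i1 i2) auto
  have valF: "(\<integral>x. (\<Sum>k<n. \<Sum>l<n. (R i k * R i l) * (x k * x l)) + (\<Sum>k<n. (2 * c i * R i k) * x k) + (c i)\<^sup>2 \<partial>MM n)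
     = \<sigma>\<^sup>2 * (\<Sum>k<n. (R i k)\<^sup>2) + (c i)\<^sup>2" for i
  proof -
    have a: "(\<integral>x. (\<Sum>k<n. \<Sum>l<n. (R i k * R i l) * (x k * x l)) \<partial>MM n) = \<sigma>\<^sup>2 * (\<Sum>k<n. (R i k)\<^sup>2)"
    proof -
      have "(\<integral>x. (\<Sum>k<n. \<Sum>l<n. (R i k * R i l) * (x k * x l)) \<partial>MM n)
          = (\<Sum>k<n. \<Sum>l<n. (R i k * R i l) * (if k = l then \<sigma>\<^sup>2 else 0))"
      proof -
        have inner: "(\<integral>x. (\<Sum>l<n. (R i k * R i l) * (x k * x l)) \<partial>MM n)
            = (\<Sum>l<n. (R i k * R i l) * (if k = l then \<sigma>\<^sup>2 else 0))" if k: "k < n" for k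
        proof -
          have "(\<integral>x. (\<Sum>l<n. (R i k * R i l) * (x k * x l)) \<partial>MM n)
             = (\<Sum>l<n. (\<integral>x. (R i k * R i l) * (x k * x l) \<partial>MM n))"
            by (rule Bochner_Integration.integral_sum) (use i2 k in auto)
          also have "\<dots> = (\<Sum>l<n. (R i k * R i l) * (if k = l then \<sigma>\<^sup>2 else 0))"
            by (rule sum.cong) (use mom2 k in auto)
          finally show ?thesis .
        qed
        have "(\<integral>x. (\<Sum>k<n. \<Sum>l<n. (R i k * R i l) * (x k * x l)) \<partial>MM n)
            = (\<Sum>k<n. (\<integral>x. (\<Sum>l<n. (R i k * R i l) * (x k * x l)) \<partial>MM n))"
          by (rule Bochner_Integration.integral_sum) (use i2 in \<open>auto intro!: Bochner_Integration.integrable_sum\<close>)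
        also have "\<dots> = (\<Sum>k<n. \<Sum>l<n. (R i k * R i l) * (if k = l then \<sigma>\<^sup>2 else 0))"
          by (rule sum.cong) (use inner in auto)
        finally show ?thesis .
      qed
      also have "\<dots> = \<sigma>\<^sup>2 * (\<Sum>k<n. (R i k)\<^sup>2)"
        by (simp add: sum_distrib_left power2_eq_square mult_ac if_distrib sum.delta cong: if_cong)
      finally show ?thesis .
    qed
    have b: "(\<integral>x. (\<Sum>k<n. (2 * c i * R i k) * x k) \<partial>MM n) = 0"
      using i1 mom1 by (simp add: Bochner_Integration.integral_sum)
    show ?thesis
      apply (subst Bochner_Integration.integral_add)
      using i1 i2 apply (auto intro!: Bochner_Integration.integrable_add Bochner_Integration.integrable_sum integrable_mult_right)[2]
      apply (subst Bochner_Integration.integral_add)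
      using i1 i2 apply (auto intro!: Bochner_Integration.integrable_add Bochner_Integration.integrable_sum integrable_mult_right)[2]
      using a b P.prob_space by simp
  qed
  have "(\<integral>x. (\<Sum>i<n. ((\<Sum>k<n. R i k * x k) + c i)\<^sup>2) \<partial>MM n)
      = (\<integral>x. (\<Sum>i<n. (\<Sum>k<n. \<Sum>l<n. (R i k * R i l) * (x k * x l)) + (\<Sum>k<n. (2 * c i * R i k) * x k) + (c i)\<^sup>2) \<partial>MM n)"
    by (simp add: pw)
  also have "\<dots> = (\<Sum>i<n. \<sigma>\<^sup>2 * (\<Sum>k<n. (R i k)\<^sup>2) + (c i)\<^sup>2)"
    by (subst Bochner_Integration.integral_sum) (use intF valF in auto)
  also have "\<dots> = (\<Sum>i<n. (c i)\<^sup>2) + \<sigma>\<^sup>2 * (\<Sum>i<n. \<Sum>k<n. (R i k)\<^sup>2)"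
    by (simp add: sum.distrib sum_distrib_left)
  finally show ?thesis .
qed

end


theorem theorem4:
  fixes n K :: nat and xi x :: "nat \<Rightarrow> real" and f :: "real \<Rightarrow> real" and \<sigma> :: real
    and yobs gamh :: "nat \<Rightarrow> real"
  assumes knots: "\<forall>i\<le>K. xi i < xi (Suc i)"
    and sigma_pos: "\<sigma> > 0"
    and rank: "full_col_rank n (K + 4) (\<lambda>i j. cubic_bspline xi K j (x i))"
    and mono: "\<forall>j. Suc j < K + 4 \<longrightarrow> gamh j \<le> gamh (Suc j)"
    and minimizer: "\<forall>gam. (\<forall>j. Suc j < K + 4 \<longrightarrow> gam j \<le> gam (Suc j)) \<longrightarrow>
         (\<Sum>i<n. (yobs i - (\<Sum>j<K + 4. cubic_bspline xi K j (x i) * gamh j))\<^sup>2)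
           \<le> (\<Sum>i<n. (yobs i - (\<Sum>j<K + 4. cubic_bspline xi K j (x i) * gam j))\<^sup>2)"
    and g_lt: "nblocks (K + 4) gamh < K + 4"
  shows
    "let J = K + 4; g = nblocks J gamh;
         B = (\<lambda>i j. cubic_bspline xi K j (x i));
         G = tie_mat gamh;
         fv = (\<lambda>i. f (x i));
         H = mmul J (mmul J B (minv J (mmul n (mtr B) B))) (mtr B);
         Hg = mmul g (mmul g (mmul J B (mtr G))
                          (minv g (mmul J (mmul n (mmul J G (mtr B)) B) (mtr G))))
                     (mmul J G (mtr B));
         D = (\<lambda>i j. H i j - Hg i j);
         M = PiM {..<n} (\<lambda>_. density lborel (normal_density 0 \<sigma>));
         y = (\<lambda>\<epsilon> i. fv i + \<epsilon> i);
         gls = (\<lambda>\<epsilon>. mvec n (mmul J (minv J (mmul n (mtr B) B)) (mtr B)) (y \<epsilon>));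
         MSE = (\<integral>\<epsilon>. (\<Sum>i<n. (mvec n Hg (y \<epsilon>) i - fv i)\<^sup>2) \<partial>M);
         MSE_ls = (\<integral>\<epsilon>. (\<Sum>i<n. (mvec J B (gls \<epsilon>) i - fv i)\<^sup>2) \<partial>M)
     in psd n D \<and>
        (\<sigma>\<^sup>2 \<ge> qform n D fv / (real J - real g) \<longrightarrow> MSE \<le> MSE_ls)"
proof -
  define J where "J = K + 4"
  define g where "g = nblocks J gamh"
  define B where "B = (\<lambda>i j. cubic_bspline xi K j (x i))"
  define G where "G = tie_mat gamh"
  define fv where "fv = (\<lambda>i. f (x i))"
  define H where "H = mmul J (mmul J B (minv J (mmul n (mtr B) B))) (mtr B)"
  define Hg where "Hg = mmul g (mmul g (mmul J B (mtr G))
                          (minv g (mmul J (mmul n (mmul J G (mtr B)) B) (mtr G))))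
                     (mmul J G (mtr B))"
  define D where "D = (\<lambda>i j. H i j - Hg i j)"
  define A2 where "A2 = mmul J B (mtr G)"
  have A2t: "mtr A2 = mmul J G (mtr B)" by (simp add: A2_def mtr_mmul)
  have S2: "mmul n (mtr A2) A2 = mmul J (mmul n (mmul J G (mtr B)) B) (mtr G)"
    unfolding A2t by (simp add: A2_def mmul_assoc)
  have HgR: "Hg = mmul g (mmul g A2 (minv g (mmul n (mtr A2) A2))) (mtr A2)"
    unfolding S2 unfolding A2t unfolding Hg_def A2_def ..
  have Jpos: "0 < J" by (simp add: J_def)
  have fcrB: "full_col_rank n J B" using rank by (simp add: J_def B_def)
  have fcr2: "full_col_rank n g A2"
    unfolding A2_def G_def g_def by (rule fcr_tie[OF fcrB Jpos])
  have Hsym: "\<And>i j. H i j = H j i" unfolding H_def by (rule proj(1)[OF fcrB])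
  have Hidem: "mmul n H H = H" unfolding H_def by (rule proj(2)[OF fcrB])
  have HB: "\<And>i j. j < J \<Longrightarrow> mmul n H B i j = B i j" unfolding H_def by (rule proj(3)[OF fcrB])
  have Htr: "(\<Sum>i<n. H i i) = real J" unfolding H_def by (rule proj(4)[OF fcrB])
  have Hgsym: "\<And>i j. Hg i j = Hg j i" unfolding HgR by (rule proj(1)[OF fcr2])
  have Hgidem: "mmul n Hg Hg = Hg" unfolding HgR by (rule proj(2)[OF fcr2])
  have Hgtr: "(\<Sum>i<n. Hg i i) = real g" unfolding HgR by (rule proj(4)[OF fcr2])
  have HA2: "mmul n H A2 = A2"
  proof (intro ext)
    fix i j
    have "mmul n H A2 i j = mmul J (mmul n H B) (mtr G) i j" unfolding A2_def by (simp add: mmul_assoc)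
    also have "\<dots> = A2 i j" unfolding A2_def by (rule mmul_cong) (auto simp: HB)
    finally show "mmul n H A2 i j = A2 i j" .
  qed
  have HHg: "mmul n H Hg = Hg" unfolding HgR by (simp add: mmul_assoc[symmetric] HA2)
  have HgH: "mmul n Hg H = Hg"
  proof (intro ext)
    fix i j
    have "mmul n Hg H i j = mmul n H Hg j i" unfolding mmul_def
      by (intro sum.cong) (auto simp: Hsym[of j] Hgsym[of i] mult_ac)
    then show "mmul n Hg H i j = Hg i j" using HHg Hgsym by simp
  qed
  have Dsym: "\<And>i j. D i j = D j i" unfolding D_def using Hsym Hgsym by simp
  have Didem: "mmul n D D = D"
  proof (intro ext)
    fix i j
    have "mmul n D D i j = mmul n H H i j - mmul n H Hg i j - mmul n Hg H i j + mmul n Hg Hg i j"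
      unfolding D_def mmul_def by (simp add: algebra_simps sum_subtractf sum.distrib)
    then show "mmul n D D i j = D i j" unfolding D_def using Hidem HHg HgH Hgidem by simp
  qed
  have psdD: "psd n D"
    unfolding psd_def
  proof
    fix v
    have "0 \<le> (\<Sum>i<n. (mvec n D v i)\<^sup>2)" by (simp add: sum_nonneg)
    then show "0 \<le> qform n D v" using sq_mvec[OF Dsym Didem] by simp
  qed
  have qD: "qform n D fv = qform n H fv - qform n Hg fv"
    unfolding qform_def D_def by (simp add: algebra_simps sum_subtractf)
  let ?M = "PiM {..<n} (\<lambda>_. density lborel (normal_density 0 \<sigma>))"
  have MSEv: "(\<integral>\<epsilon>. (\<Sum>i<n. (mvec n Hg (\<lambda>i. fv i + \<epsilon> i) i - fv i)\<^sup>2) \<partial>?M)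
      = (\<Sum>i<n. (fv i)\<^sup>2) - qform n Hg fv + \<sigma>\<^sup>2 * real g"
  proof -
    have "(\<integral>\<epsilon>. (\<Sum>i<n. (mvec n Hg (\<lambda>i. fv i + \<epsilon> i) i - fv i)\<^sup>2) \<partial>?M)
       = (\<integral>\<epsilon>. (\<Sum>i<n. ((\<Sum>k<n. Hg i k * \<epsilon> k) + (mvec n Hg fv i - fv i))\<^sup>2) \<partial>?M)"
      by (intro Bochner_Integration.integral_cong refl sum.cong arg_cong[where f="\<lambda>t. t\<^sup>2"]) (simp add: mvec_def distrib_left sum.distrib)
    also have "\<dots> = (\<Sum>i<n. (mvec n Hg fv i - fv i)\<^sup>2) + \<sigma>\<^sup>2 * (\<Sum>i<n. \<Sum>k<n. (Hg i k)\<^sup>2)"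
      by (rule mse[OF sigma_pos])
    also have "\<dots> = (\<Sum>i<n. (fv i)\<^sup>2) - qform n Hg fv + \<sigma>\<^sup>2 * real g"
      using resid[OF Hgsym Hgidem] frob[OF Hgsym Hgidem] Hgtr by simp
    finally show ?thesis .
  qed
  have glsH: "mvec J B (mvec n (mmul J (minv J (mmul n (mtr B) B)) (mtr B)) v) = mvec n H v" for v
    unfolding H_def by (simp add: mvec_mmul[symmetric] mmul_assoc)
  have MSElsv: "(\<integral>\<epsilon>. (\<Sum>i<n. (mvec J B (mvec n (mmul J (minv J (mmul n (mtr B) B)) (mtr B)) (\<lambda>i. fv i + \<epsilon> i)) i - fv i)\<^sup>2) \<partial>?M)
      = (\<Sum>i<n. (fv i)\<^sup>2) - qform n H fv + \<sigma>\<^sup>2 * real J"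
  proof -
    have "(\<integral>\<epsilon>. (\<Sum>i<n. (mvec J B (mvec n (mmul J (minv J (mmul n (mtr B) B)) (mtr B)) (\<lambda>i. fv i + \<epsilon> i)) i - fv i)\<^sup>2) \<partial>?M)
       = (\<integral>\<epsilon>. (\<Sum>i<n. ((\<Sum>k<n. H i k * \<epsilon> k) + (mvec n H fv i - fv i))\<^sup>2) \<partial>?M)"
      unfolding glsH by (intro Bochner_Integration.integral_cong refl sum.cong arg_cong[where f="\<lambda>t. t\<^sup>2"]) (simp add: mvec_def distrib_left sum.distrib)
    also have "\<dots> = (\<Sum>i<n. (mvec n H fv i - fv i)\<^sup>2) + \<sigma>\<^sup>2 * (\<Sum>i<n. \<Sum>k<n. (H i k)\<^sup>2)"
      by (rule mse[OF sigma_pos])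
    also have "\<dots> = (\<Sum>i<n. (fv i)\<^sup>2) - qform n H fv + \<sigma>\<^sup>2 * real J"
      using resid[OF Hsym Hidem] frob[OF Hsym Hidem] Htr by simp
    finally show ?thesis .
  qed
  have gJ: "real g < real J" using g_lt by (simp add: g_def J_def)
  have final: "psd n D \<and> (\<sigma>\<^sup>2 \<ge> qform n D fv / (real J - real g) \<longrightarrow>
     (\<integral>\<epsilon>. (\<Sum>i<n. (mvec n Hg (\<lambda>i. fv i + \<epsilon> i) i - fv i)\<^sup>2) \<partial>?M)
     \<le> (\<integral>\<epsilon>. (\<Sum>i<n. (mvec J B (mvec n (mmul J (minv J (mmul n (mtr B) B)) (mtr B)) (\<lambda>i. fv i + \<epsilon> i)) i - fv i)\<^sup>2) \<partial>?M))"
  proof (intro conjI impI psdD)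
    assume "\<sigma>\<^sup>2 \<ge> qform n D fv / (real J - real g)"
    then have "qform n D fv \<le> \<sigma>\<^sup>2 * (real J - real g)" using gJ by (simp add: divide_le_eq)
    then show "(\<integral>\<epsilon>. (\<Sum>i<n. (mvec n Hg (\<lambda>i. fv i + \<epsilon> i) i - fv i)\<^sup>2) \<partial>?M)
     \<le> (\<integral>\<epsilon>. (\<Sum>i<n. (mvec J B (mvec n (mmul J (minv J (mmul n (mtr B) B)) (mtr B)) (\<lambda>i. fv i + \<epsilon> i)) i - fv i)\<^sup>2) \<partial>?M)"
      unfolding MSEv MSElsv qD by (simp add: algebra_simps)
  qed
  show ?thesis
    using final unfolding Let_def J_def g_def B_def G_def fv_def D_def H_def Hg_def .
qed

end
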